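(* Let $p$ be a prime, $m$ a positive integer, $q=p^m$ and $n=q-1$. For any integer $e$ with $1 \le e \le n-1$ and $\gcd(e, q-1)=2$, the size $\ell_e$ of the $p$-cyclotomic coset $C_e$ modulo $n$ is equal to $m$.
   Context: For $j\in\mathbb{Z}_n=\{0,1,\dots,n-1\}$, the $p$-cyclotomic coset modulo $n$ containing $j$ is $C_j=\{j, pj, p^2j,\dots,p^{\ell_j-1}j\}$ (computed modulo $n$), where $\ell_j$ is the smallest positive integer with $p^{\ell_j}j\equiv j \pmod n$; $\ell_j=|C_j|$ is called the size of $C_j$. *)

theory Defs
  imports "HOL-Number_Theory.Number_Theory"
begin

definition cyc_coset_size :: "nat \<Rightarrow> nat \<Rightarrow> nat \<Rightarrow> nat" where
  "cyc_coset_size p n j = (LEAST l. 0 < l \<and> [p ^ l * j = j] (mod n))"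

definition cyc_coset :: "nat \<Rightarrow> nat \<Rightarrow> nat \<Rightarrow> nat set" where
  "cyc_coset p n j = {(p ^ i * j) mod n | i. i < cyc_coset_size p n j}"

end

theory Submission
  imports Defs
begin

theorem lemma1:
  fixes p m q n e :: nat
  assumes "prime p" and "0 < m" and "q = p ^ m" and "n = q - 1"
    and "1 \<le> e" and "e \<le> n - 1" and "gcd e (q - 1) = 2"
  shows "cyc_coset_size p n e = m"
  unfolding cyc_coset_size_def
proof (rule Least_equality)
  have p2: "p \<ge> 2" using assms(1) prime_ge_2_nat by blast
  have q1: "q \<ge> 1" using assms(3) p2 by simp
  have "p ^ m * e = n * e + e" using assms(3,4) q1 by (simp add: algebra_simps)
  then show "0 < m \<and> [p ^ m * e = e] (mod n)" using assms(2)
    by (simp add: cong_def)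
next
  fix y assume H: "0 < y \<and> [p ^ y * e = e] (mod n)"
  show "m \<le> y"
  proof (rule ccontr)
    assume "\<not> m \<le> y"
    hence ym: "y < m" by simp
    have p2: "p \<ge> 2" using assms(1) prime_ge_2_nat by blast
    have "p ^ y \<ge> 1" using p2 by simp
    have "p ^ y * e \<ge> e" using p2 by simp
    hence "n dvd (p ^ y * e - e)" using H cong_altdef_nat by blast
    hence d: "n dvd (p ^ y - 1) * e" by (simp add: diff_mult_distrib)
    obtain e' where e': "e = 2 * e'" using assms(7) by (metis dvd_def gcd_dvd1)
    obtain n' where n': "n = 2 * n'" using assms(4,7) by (metis dvd_def gcd_dvd2)
    have "2 * gcd e' n' = 2" using assms(4,7) e' n' by (metis gcd_mult_distrib_nat)
    hence "gcd e' n' = 1" by simp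
    have "n' dvd (p ^ y - 1) * e'" using d e' n' by simp
    hence dd: "n' dvd p ^ y - 1"
      using \<open>gcd e' n' = 1\<close> by (metis coprime_dvd_mult_left_iff coprime_iff_gcd_eq_1 gcd.commute)
    have pos: "p ^ y - 1 > 0" proof -
      have "p ^ y > 1" using p2 H by (intro one_less_power) auto
      thus ?thesis by simp
    qed
    have le: "p ^ y \<le> p ^ (m - 1)" using ym p2 by (intro power_increasing) auto
    have eq: "p ^ m = p * p ^ (m - 1)" using assms(2) by (cases m) auto
    have "2 * p ^ y \<le> p * p ^ (m - 1)" by (rule mult_le_mono[OF p2 le])
    hence "2 * p ^ y \<le> p ^ m" using eq by linarith
    hence "2 * (p ^ y - 1) < p ^ m - 1" using \<open>p ^ y \<ge> 1\<close> by linarith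
    hence "p ^ y - 1 < n'" using n' assms(3,4) by simp
    with dd pos show False using dvd_imp_le by fastforce
  qed
qed

end
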